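(* Under the hypotheses of the previous setting — $k\ge 2$, $\mathcal H$ a 3-uniform linear hypergraph with no Berge cycle of length $2k+1$, $\pi$ a choice function on $\mathcal H$, $G_\pi$ the graph with edge set $\{\pi(E):E\in\mathcal H,\ \pi(E)\neq\emptyset\}$, $T$ a subtree of $G_\pi$, $x\in V(T)$, $V_i$ the set of vertices of $T$ at distance exactly $i$ from $x$ in $T$, and $G_i=G_\pi[V_i]$ — we have \[ e(G_i)\le (2k-2)|V_i| \quad\text{for all } 1\le i\le k. \]
   Context: A hypergraph is linear if any two distinct hyperedges share at most one vertex. A Berge cycle of length $m$ is a family of $m$ distinct hyperedges $H_0,\dots,H_{m-1}$ for which there exist distinct vertices $v_0,\dots,v_{m-1}$ with $\{v_i,v_{i+1}\}\subset H_i$ (indices mod $m$). A choice function on $\mathcal H$ is a map $\pi$ assigning to each hyperedge $E$ either a 2-element subset $\pi(E)\subset E$ or $\emptyset$. $e(G)$ is the number of edges of $G$. *)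

theory Defs
  imports Main
begin

definition uniform3 :: "'a set set \<Rightarrow> bool" where
  "uniform3 H \<longleftrightarrow> (\<forall>E\<in>H. card E = 3)"

definition linear_hg :: "'a set set \<Rightarrow> bool" where
  "linear_hg H \<longleftrightarrow> (\<forall>E\<in>H. \<forall>F\<in>H. E \<noteq> F \<longrightarrow> card (E \<inter> F) \<le> 1)"

definition berge_cycle :: "'a set set \<Rightarrow> nat \<Rightarrow> bool" where
  "berge_cycle H m \<longleftrightarrow> (\<exists>(Hs :: nat \<Rightarrow> 'a set) (vs :: nat \<Rightarrow> 'a).
      inj_on Hs {..<m} \<and> inj_on vs {..<m} \<and> Hs ` {..<m} \<subseteq> H \<and>
      (\<forall>i<m. {vs i, vs ((i + 1) mod m)} \<subseteq> Hs i))"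

definition choice_function :: "'a set set \<Rightarrow> ('a set \<Rightarrow> 'a set) \<Rightarrow> bool" where
  "choice_function H \<pi> \<longleftrightarrow> (\<forall>E\<in>H. \<pi> E = {} \<or> (\<pi> E \<subseteq> E \<and> card (\<pi> E) = 2))"

definition G_pi :: "'a set set \<Rightarrow> ('a set \<Rightarrow> 'a set) \<Rightarrow> 'a set set" where
  "G_pi H \<pi> = {\<pi> E | E. E \<in> H \<and> \<pi> E \<noteq> {}}"

fun walk :: "'a set set \<Rightarrow> 'a list \<Rightarrow> bool" where
  "walk Es [] = False"
| "walk Es [v] = True"
| "walk Es (u # v # vs) = ({u, v} \<in> Es \<and> walk Es (v # vs))"

definition connected_on :: "'a set \<Rightarrow> 'a set set \<Rightarrow> bool" where
  "connected_on V Es \<longleftrightarrow> (\<forall>u\<in>V. \<forall>v\<in>V. \<exists>p. walk Es p \<and> hd p = u \<and> last p = v)"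

definition has_cycle :: "'a set set \<Rightarrow> bool" where
  "has_cycle Es \<longleftrightarrow> (\<exists>(vs :: nat \<Rightarrow> 'a) m. m \<ge> 3 \<and> inj_on vs {..<m} \<and>
      (\<forall>i<m. {vs i, vs ((i + 1) mod m)} \<in> Es))"

definition is_tree :: "'a set \<Rightarrow> 'a set set \<Rightarrow> bool" where
  "is_tree VT ET \<longleftrightarrow> finite VT \<and> VT \<noteq> {} \<and>
     (\<forall>e\<in>ET. e \<subseteq> VT \<and> card e = 2) \<and> connected_on VT ET \<and> \<not> has_cycle ET"

definition gdist :: "'a set set \<Rightarrow> 'a \<Rightarrow> 'a \<Rightarrow> nat" where
  "gdist Es u v = (LEAST n. \<exists>p. walk Es p \<and> hd p = u \<and> last p = v \<and> length p = n + 1)"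

definition level_set :: "'a set \<Rightarrow> 'a set set \<Rightarrow> 'a \<Rightarrow> nat \<Rightarrow> 'a set" where
  "level_set VT ET x i = {v \<in> VT. gdist ET x v = i}"

definition induced_edges :: "'a set set \<Rightarrow> 'a set \<Rightarrow> nat" where
  "induced_edges G S = card {e \<in> G. e \<subseteq> S}"

end

theory Submission
  imports Defs
begin


lemma walk_ne: "walk F xs \<Longrightarrow> xs \<noteq> []"
  by (cases xs) auto

lemma walk_Cons2: "ys \<noteq> [] \<Longrightarrow> walk F (u # ys) \<longleftrightarrow> {u, hd ys} \<in> F \<and> walk F ys"
  by (cases ys) auto

lemma walk_nth: "walk F xs \<Longrightarrow> Suc m < length xs \<Longrightarrow> {xs!m, xs!Suc m} \<in> F"
proof (induction F xs arbitrary: m rule: walk.induct)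
  case (3 Es u v vs)
  then show ?case by (cases m) auto
qed auto

lemma walk_snoc: "walk F xs \<Longrightarrow> {last xs, v} \<in> F \<Longrightarrow> walk F (xs @ [v])"
proof (induction F xs rule: walk.induct)
  case (3 Es u w vs)
  then show ?case by auto
qed auto

lemma walk_take: "walk F xs \<Longrightarrow> 0 < n \<Longrightarrow> walk F (take n xs)"
proof (induction F xs arbitrary: n rule: walk.induct)
  case (3 Es u v vs)
  then show ?case
  proof (cases n)
    case (Suc n')
    then show ?thesis
    proof (cases n')
      case (Suc n'')
      have "walk Es (take (Suc n'') (v # vs))" using 3(1)[of "Suc n''"] 3(2) by simp
      then show ?thesis using 3 \<open>n = Suc n'\<close> Suc by simp
    qed simp
  qed simp
qed auto

lemma walk_append: "xs \<noteq> [] \<Longrightarrow> ys \<noteq> [] \<Longrightarrow> walk F (xs @ ys) \<longleftrightarrow> walk F xs \<and> walk F ys \<and> {last xs, hd ys} \<in> F"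
proof (induction xs)
  case Nil then show ?case by simp
next
  case (Cons a xs)
  show ?case
  proof (cases "xs = []")
    case True then show ?thesis using Cons.prems by (auto simp add: walk_Cons2)
  next
    case False
    then show ?thesis using Cons by (simp add: walk_Cons2)
  qed
qed

lemma walk_mono: "walk F xs \<Longrightarrow> F \<subseteq> G \<Longrightarrow> walk G xs"
  by (induction F xs rule: walk.induct) auto

lemma walk_map_upt: "a < b \<Longrightarrow> (\<And>t. a \<le> t \<Longrightarrow> Suc t < b \<Longrightarrow> {f t, f (Suc t)} \<in> F) \<Longrightarrow> walk F (map f [a..<b])"
proof (induction b)
  case 0 then show ?case by simp
next
  case (Suc b)
  show ?case
  proof (cases "a < b")
    case True
    have w: "walk F (map f [a..<b])" using Suc True by auto
    have "last (map f [a..<b]) = f (b - 1)" using True by (simp add: last_map)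
    moreover have "{f (b - 1), f b} \<in> F" using Suc.prems(2)[of "b - 1"] True by auto
    ultimately show ?thesis using walk_snoc[OF w, of "f b"] True by simp
  next
    case False
    then have "a = b" using Suc by simp
    then show ?thesis by simp
  qed
qed

lemma extend:
  assumes finW: "finite W" and c2: "\<And>e. e \<in> F \<Longrightarrow> card e = 2"
    and deg: "\<And>w. w \<in> W \<Longrightarrow> D \<le> card {u\<in>W. {w,u} \<in> F}" and finA: "finite A"
  shows "walk F xs \<Longrightarrow> distinct xs \<Longrightarrow> set xs \<subseteq> W \<Longrightarrow> set xs \<inter> A = {} \<Longrightarrow>
    length xs + n + card A \<le> D + 1 \<Longrightarrow>
    \<exists>ys. length ys = n \<and> walk F (ys @ xs) \<and> distinct (ys @ xs) \<and> set ys \<subseteq> W \<and> set ys \<inter> A = {}"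
proof (induction n)
  case 0 then show ?case by auto
next
  case (Suc n)
  then obtain ys where ys: "length ys = n" "walk F (ys @ xs)" "distinct (ys @ xs)" "set ys \<subseteq> W" "set ys \<inter> A = {}"
    by auto
  define zs where "zs = ys @ xs"
  have zne: "zs \<noteq> []" using walk_ne[OF Suc.prems(1)] zs_def by simp
  define h where "h = hd zs"
  have hW: "h \<in> W" using zne Suc.prems(3) ys(4) unfolding h_def zs_def by (cases ys) auto
  define N where "N = {u\<in>W. {h,u} \<in> F}"
  define B where "B = (set zs - {h}) \<union> A"
  have lx: "length xs \<ge> 1" using walk_ne[OF Suc.prems(1)] by (cases xs) auto
  have "card (set zs - {h}) = length zs - 1"
    using ys(3) zne unfolding zs_def[symmetric] h_def
    by (simp add: card_Diff_singleton distinct_card)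
  then have "card B \<le> length zs - 1 + card A" unfolding B_def
    by (metis card_Un_le)
  also have "\<dots> < D" using Suc.prems(5) ys(1) lx unfolding zs_def by simp
  finally have cB: "card B < D" .
  have "D \<le> card N" using deg[OF hW] N_def by simp
  then have "\<not> N \<subseteq> B"
    using cB finA unfolding B_def by (meson card_mono finite_Un finite_Diff finite_set le_less_trans not_le)
  then obtain u where uN: "u \<in> N" and uB: "u \<notin> B" by auto
  have "u \<noteq> h"
  proof
    assume "u = h"
    then have "{h} \<in> F" using uN N_def by simp
    then show False using c2 by fastforce
  qed
  then have uz: "u \<notin> set zs" and uA: "u \<notin> A" using uB B_def by auto
  have "{u, hd zs} \<in> F" using uN N_def h_def by (simp add: insert_commute)
  then have "walk F (u # zs)" using ys(2) zne zs_def walk_Cons2 by metis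
  moreover have "distinct (u # zs)" using uz ys(3) zs_def by simp
  ultimately show ?case using ys uz uA uN N_def zs_def
    by (intro exI[of _ "u # ys"]) auto
qed


lemma no_dense:
  fixes F :: "'a set set" and V W :: "'a set" and anc :: "'a \<Rightarrow> nat \<Rightarrow> 'a" and i c :: nat
  assumes edges: "\<And>e. e \<in> F \<Longrightarrow> e \<subseteq> V \<and> card e = 2"
    and i1: "1 \<le> i"
    and anc_i: "\<And>v. v \<in> V \<Longrightarrow> anc v i = v"
    and anc_0: "\<And>u v. u \<in> V \<Longrightarrow> v \<in> V \<Longrightarrow> anc u 0 = anc v 0"
    and forb: "\<And>xs j. j < i \<Longrightarrow> distinct xs \<Longrightarrow> walk F xs \<Longrightarrow> set xs \<subseteq> V \<Longrightarrow>
        length xs = 2*c + 2*j + 2 \<Longrightarrow> anc (hd xs) j = anc (last xs) j \<Longrightarrow>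
        anc (hd xs) (Suc j) = anc (last xs) (Suc j)"
    and WV: "W \<subseteq> V" "finite W" "W \<noteq> {}"
    and deg: "\<And>w. w \<in> W \<Longrightarrow> 2*(c+i) - 1 \<le> card {u\<in>W. {w,u} \<in> F}"
  shows False
proof -
  define D where "D = 2*(c+i) - 1"
  have c2: "\<And>e. e \<in> F \<Longrightarrow> card e = 2" using edges by blast
  obtain w where wW: "w \<in> W" using WV by auto
  have "1 \<le> card {u\<in>W. {w,u} \<in> F}" using deg[OF wW] i1 by simp
  then obtain u where uW: "u \<in> W" and wu: "{w,u} \<in> F"
    by (metis (no_types, lifting) Collect_empty_eq card.empty not_one_le_zero)
  have wnu: "w \<noteq> u" using c2[OF wu] by auto
  define P where "P j \<longleftrightarrow> (\<exists>a b. a\<in>W \<and> b\<in>W \<and> {a,b} \<in> F \<and> anc a (Suc j) \<noteq> anc b (Suc j))" for j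
  have "P (i - 1)"
    unfolding P_def using wW uW wu wnu anc_i WV(1) i1
    by (intro exI[of _ w] exI[of _ u]) (auto simp: subset_iff)
  define j where "j = (LEAST j. P j)"
  have Pj: "P j" unfolding j_def by (rule LeastI) fact
  have jle: "j \<le> i - 1" unfolding j_def by (rule Least_le) fact
  have agree: "anc a j = anc b j" if "a\<in>W" "b\<in>W" "{a,b}\<in>F" for a b
  proof (cases j)
    case 0 then show ?thesis using anc_0 that WV(1) by auto
  next
    case (Suc j')
    then have "\<not> P j'" using not_less_Least j_def by (metis lessI)
    then show ?thesis using that Suc unfolding P_def by blast
  qed
  have path_agree: "walk F xs \<Longrightarrow> set xs \<subseteq> W \<Longrightarrow> anc (hd xs) j = anc (last xs) j" for xs
  proof (induction xs)
    case Nil then show ?case by simp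
  next
    case (Cons a xs)
    show ?case
    proof (cases "xs = []")
      case True then show ?thesis by simp
    next
      case False
      then have e: "{a, hd xs} \<in> F" and wx: "walk F xs" using Cons.prems walk_Cons2 by metis+
      have "hd xs \<in> W" using False Cons.prems(2) by (cases xs) auto
      then have "anc a j = anc (hd xs) j" using agree e Cons.prems(2) by auto
      then show ?thesis using Cons False wx by auto
    qed
  qed
  have ji: "j < i" using jle i1 by simp
  have nocross: "anc (hd xs) (Suc j) = anc (last xs) (Suc j)"
    if "walk F xs" "distinct xs" "set xs \<subseteq> W" "length xs = 2*c+2*j+2" for xs
    using forb[OF ji that(2,1)] that path_agree WV(1) by blast
  obtain a b where aW: "a\<in>W" and bW: "b\<in>W" and ab: "{a,b}\<in>F" and dab: "anc a (Suc j) \<noteq> anc b (Suc j)"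
    using Pj P_def by blast
  have anb: "a \<noteq> b" using dab by auto
  have degD: "\<And>w. w \<in> W \<Longrightarrow> D \<le> card {u\<in>W. {w,u} \<in> F}" using deg D_def by simp
  note ext = extend[OF WV(2) c2 degD]
  have wba: "walk F [b,a]" using ab by (simp add: insert_commute)
  have "length [b,a] + (2*c+2*j) + card ({}::'a set) \<le> D + 1" using ji D_def by simp
  then obtain ys where ys: "length ys = 2*c+2*j" "walk F (ys @ [b,a])" "distinct (ys @ [b,a])" "set ys \<subseteq> W"
    using ext[of "{}" "[b,a]" "2*c+2*j"] wba anb aW bW by auto
  define L where "L = ys @ [b,a]"
  have lenL: "length L = 2*c+2*j+2" using ys L_def by simp
  have LW: "set L \<subseteq> W" using ys aW bW L_def by auto
  have Lb: "L ! (2*c+2*j) = b" and La: "last L = a" using ys(1) L_def by (simp_all add: nth_append)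
  have hc: "anc (hd L) (Suc j) = anc a (Suc j)" using nocross[of L] ys L_def lenL LW La by simp
  have hdL: "hd L = L ! 0" using lenL by (cases L) auto
  show False
  proof (cases "j = i - 1")
    case True
    then have "Suc j = i" using i1 by simp
    then have "hd L = a" using hc anc_i LW WV(1) aW hdL lenL
      by (metis hd_in_set le_zero_eq list.size(3) subset_iff zero_neq_numeral add_is_0)
    moreover have "last L = L ! (2*c+2*j+1)" using lenL by (subst last_conv_nth) auto
    moreover have "L ! 0 \<noteq> L ! (2*c+2*j+1)" using ys(3) L_def lenL
      by (simp add: nth_eq_iff_index_eq)
    ultimately show False using La hdL by simp
  next
    case False
    then have ji2: "j + 2 \<le> i" using ji by simp
    have P2: "anc (L!m) (Suc j) = anc (L!(m+2)) (Suc j)" if m: "m + 2 \<le> 2*c+2*j+1" for m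
    proof -
      define y where "y = L ! Suc m"
      define v1 where "v1 = L ! m"
      define v2 where "v2 = L ! (m+2)"
      have dL: "distinct L" using ys L_def by simp
      have wL: "walk F L" using ys L_def by simp
      have y1: "y \<noteq> v1" and y2: "y \<noteq> v2" using dL m lenL unfolding y_def v1_def v2_def
        by (simp_all add: nth_eq_iff_index_eq)
      have inW: "y \<in> W" "v1 \<in> W" "v2 \<in> W" using LW m lenL unfolding y_def v1_def v2_def
        by (auto intro!: nth_mem[THEN subsetD[OF LW]])
      have e1: "{y, v1} \<in> F" using walk_nth[OF wL, of m] m lenL unfolding y_def v1_def
        by (simp add: insert_commute)
      have e2: "{y, v2} \<in> F" using walk_nth[OF wL, of "Suc m"] m lenL unfolding y_def v2_def
        by simp
      have "card {v1,v2} \<le> 2" by (cases "v1 = v2") auto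
      then have "length [y] + (2*c+2*j) + card {v1,v2} \<le> D + 1"
        using ji2 D_def by simp
      then obtain zs where zs: "length zs = 2*c+2*j" "walk F (zs @ [y])" "distinct (zs @ [y])"
          "set zs \<subseteq> W" "set zs \<inter> {v1,v2} = {}"
        using ext[of "{v1,v2}" "[y]" "2*c+2*j"] y1 y2 inW by auto
      have Z1: "anc (hd ((zs @ [y]) @ [v1])) (Suc j) = anc v1 (Suc j)"
        using nocross[of "(zs @ [y]) @ [v1]"] walk_snoc[OF zs(2), of v1] e1 zs y1 inW by auto
      have Z2: "anc (hd ((zs @ [y]) @ [v2])) (Suc j) = anc v2 (Suc j)"
        using nocross[of "(zs @ [y]) @ [v2]"] walk_snoc[OF zs(2), of v2] e2 zs y2 inW by auto
      have "hd ((zs @ [y]) @ [v1]) = hd ((zs @ [y]) @ [v2])" by (cases zs) auto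
      then show ?thesis using Z1 Z2 v1_def v2_def by simp
    qed
    have "2*t \<le> 2*c+2*j \<longrightarrow> anc (L!(2*c+2*j - 2*t)) (Suc j) = anc b (Suc j)" for t
    proof (induction t)
      case 0 then show ?case using Lb by simp
    next
      case (Suc t)
      show ?case
      proof
        assume h: "2 * Suc t \<le> 2*c+2*j"
        have "anc (L!(2*c+2*j - 2*Suc t)) (Suc j) = anc (L!(2*c+2*j - 2*Suc t + 2)) (Suc j)"
          using P2[of "2*c+2*j - 2*Suc t"] h by simp
        moreover have "2*c+2*j - 2*Suc t + 2 = 2*c+2*j - 2*t" using h by simp
        ultimately show "anc (L!(2*c+2*j - 2*Suc t)) (Suc j) = anc b (Suc j)" using Suc h by simp
      qed
    qed
    from this[of "c+j"] have "anc (L!0) (Suc j) = anc b (Suc j)" by simp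
    then show False using hc hdL dab by simp
  qed
qed


lemma card2_ex: "card e = 2 \<Longrightarrow> w \<in> e \<Longrightarrow> \<exists>u. e = {w,u}"
  by (metis card_2_iff insert_commute insertE singletonD)

lemma core:
  fixes F :: "'a set set" and V :: "'a set" and anc :: "'a \<Rightarrow> nat \<Rightarrow> 'a" and i c :: nat
  assumes finV: "finite V"
    and edges: "\<And>e. e \<in> F \<Longrightarrow> e \<subseteq> V \<and> card e = 2"
    and i1: "1 \<le> i"
    and anc_i: "\<And>v. v \<in> V \<Longrightarrow> anc v i = v"
    and anc_0: "\<And>u v. u \<in> V \<Longrightarrow> v \<in> V \<Longrightarrow> anc u 0 = anc v 0"
    and forb: "\<And>xs j. j < i \<Longrightarrow> distinct xs \<Longrightarrow> walk F xs \<Longrightarrow> set xs \<subseteq> V \<Longrightarrow>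
        length xs = 2*c + 2*j + 2 \<Longrightarrow> anc (hd xs) j = anc (last xs) j \<Longrightarrow>
        anc (hd xs) (Suc j) = anc (last xs) (Suc j)"
  shows "card F \<le> (2*(c+i) - 2) * card V"
proof -
  define K where "K = 2*(c+i) - 2"
  have low: "\<exists>w\<in>W. card {u\<in>W. {w,u} \<in> F} \<le> K" if "W \<subseteq> V" "W \<noteq> {}" for W
  proof (rule ccontr)
    assume "\<not> ?thesis"
    then have lt: "\<And>w. w \<in> W \<Longrightarrow> K < card {u\<in>W. {w,u} \<in> F}"
      by (meson not_le)
    have "\<And>n::nat. K < n \<Longrightarrow> 2*(c+i) - 1 \<le> n" unfolding K_def using i1 by arith
    then have "\<And>w. w \<in> W \<Longrightarrow> 2*(c+i) - 1 \<le> card {u\<in>W. {w,u} \<in> F}"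
      using lt by blast
    then show False
      using no_dense[OF edges i1 anc_i anc_0 forb that(1) finite_subset[OF that(1) finV] that(2)]
      by blast
  qed
  have cnt: "\<forall>W. W \<subseteq> V \<and> card W = n \<longrightarrow> card {e\<in>F. e \<subseteq> W} \<le> K * card W" for n
  proof (induction n)
    case 0
    show ?case
    proof (intro allI impI)
      fix W assume W: "W \<subseteq> V \<and> card W = 0"
      then have "W = {}" using finite_subset[of W V] finV by auto
      have "\<And>e. e \<in> F \<Longrightarrow> e \<noteq> {}" using edges by (metis card.empty zero_neq_numeral)
      then have "{e\<in>F. e \<subseteq> W} = {}" using \<open>W = {}\<close> by blast
      then show "card {e\<in>F. e \<subseteq> W} \<le> K * card W" by (metis card.empty zero_le)
    qed
  next
    case (Suc n)
    show ?case
    proof (intro allI impI)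
      fix W assume W: "W \<subseteq> V \<and> card W = Suc n"
      then have finW: "finite W" using finite_subset[of W V] finV by blast
      have "W \<noteq> {}" using W by auto
      then obtain w where wW: "w \<in> W" and dw: "card {u\<in>W. {w,u} \<in> F} \<le> K" using low W by blast
      define W' where "W' = W - {w}"
      have cW': "card W' = n" using W wW W'_def finW by simp
      have "W' \<subseteq> V" using W W'_def by auto
      then have IH: "card {e\<in>F. e \<subseteq> W'} \<le> K * n" using Suc.IH[rule_format, of W'] cW' by simp
      have sub: "{e\<in>F. e \<subseteq> W} \<subseteq> {e\<in>F. e \<subseteq> W'} \<union> (\<lambda>u. {w,u}) ` {u\<in>W. {w,u} \<in> F}"
      proof
        fix e assume e: "e \<in> {e\<in>F. e \<subseteq> W}"
        show "e \<in> {e\<in>F. e \<subseteq> W'} \<union> (\<lambda>u. {w,u}) ` {u\<in>W. {w,u} \<in> F}"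
        proof (cases "w \<in> e")
          case True
          have eF: "e \<in> F" and eW: "e \<subseteq> W" using e by auto
          obtain u where eu: "e = {w,u}" using card2_ex[OF conjunct2[OF edges[OF eF]] True] by blast
          have "u \<in> W" using eu eW by auto
          then have "e \<in> (\<lambda>u. {w,u}) ` {u\<in>W. {w,u} \<in> F}"
            using eu eF by (intro image_eqI[of _ _ u]) auto
          then show ?thesis by blast
        next
          case False then show ?thesis using e W'_def by auto
        qed
      qed
      have finE: "finite {e\<in>F. e \<subseteq> W'}"
        by (rule finite_subset[of _ "Pow W'"]) (use finW W'_def in auto)
      have "card {e\<in>F. e \<subseteq> W} \<le> card ({e\<in>F. e \<subseteq> W'} \<union> (\<lambda>u. {w,u}) ` {u\<in>W. {w,u} \<in> F})"
        by (rule card_mono[OF _ sub]) (use finE finW in auto)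
      also have "\<dots> \<le> card {e\<in>F. e \<subseteq> W'} + card ((\<lambda>u. {w,u}) ` {u\<in>W. {w,u} \<in> F})"
        by (rule card_Un_le)
      also have "\<dots> \<le> K * n + K"
        using IH dw card_image_le[of "{u\<in>W. {w,u} \<in> F}" "\<lambda>u. {w,u}"] finW by simp
      finally show "card {e\<in>F. e \<subseteq> W} \<le> K * card W" using W by simp
    qed
  qed
  have "{e\<in>F. e \<subseteq> V} = F" using edges by auto
  then show ?thesis using cnt[of "card V"] K_def by auto
qed



lemma mod_two_step: "n < (m::nat) \<Longrightarrow> 3 \<le> m \<Longrightarrow> ((n + 1) mod m + 1) mod m \<noteq> n"
proof -
  assume a: "n < m" "3 \<le> m"
  have "((n + 1) mod m + 1) mod m = (n + 2) mod m" by (simp add: mod_Suc_eq)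
  moreover have "(n + 2) mod m \<noteq> n"
  proof (cases "n + 2 < m")
    case True then show ?thesis by simp
  next
    case False
    then have "(n + 2) mod m = n + 2 - m" using a by (simp add: le_mod_geq)
    then show ?thesis using a False by simp
  qed
  ultimately show ?thesis by simp
qed

lemma cycle_berge:
  assumes cf: "choice_function H \<pi>" and d: "distinct cyc" and w: "walk (G_pi H \<pi>) cyc"
    and cl: "{last cyc, hd cyc} \<in> G_pi H \<pi>" and m: "length cyc = m" and m3: "3 \<le> m"
  shows "berge_cycle H m"
proof -
  define vs where "vs n = cyc ! n" for n
  have edge: "{vs n, vs ((n+1) mod m)} \<in> G_pi H \<pi>" if n: "n < m" for n
  proof (cases "Suc n < m")
    case True
    then show ?thesis using walk_nth[OF w, of n] m vs_def by simp
  next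
    case False
    then have "n = m - 1" using n by simp
    moreover have "last cyc = cyc ! (m - 1)" using m m3 by (subst last_conv_nth) auto
    moreover have "hd cyc = cyc ! 0" using m m3 by (cases cyc) auto
    ultimately show ?thesis using cl vs_def m3 by simp
  qed
  define Hs where "Hs n = (SOME E. E \<in> H \<and> \<pi> E \<noteq> {} \<and> \<pi> E = {vs n, vs ((n+1) mod m)})" for n
  have HsP: "Hs n \<in> H \<and> \<pi> (Hs n) = {vs n, vs ((n+1) mod m)}" if "n < m" for n
  proof -
    have "\<exists>E. E \<in> H \<and> \<pi> E \<noteq> {} \<and> \<pi> E = {vs n, vs ((n+1) mod m)}"
      using edge[OF that] unfolding G_pi_def by auto
    then have "Hs n \<in> H \<and> \<pi> (Hs n) \<noteq> {} \<and> \<pi> (Hs n) = {vs n, vs ((n+1) mod m)}"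
      unfolding Hs_def by (rule someI_ex)
    then show ?thesis by blast
  qed
  have vinj: "inj_on vs {..<m}"
    unfolding inj_on_def vs_def using d m by (simp add: nth_eq_iff_index_eq)
  have sm: "(n+1) mod m < m" for n using m3 by simp
  have vi: "\<And>a b. a < m \<Longrightarrow> b < m \<Longrightarrow> vs a = vs b \<Longrightarrow> a = b"
    using vinj by (meson inj_onD lessThan_iff)
  have Hinj: "inj_on Hs {..<m}"
  proof (rule inj_onI)
    fix n1 n2 assume n1: "n1 \<in> {..<m}" and n2: "n2 \<in> {..<m}" and eq: "Hs n1 = Hs n2"
    have l1: "n1 < m" and l2: "n2 < m" using n1 n2 by auto
    have "{vs n1, vs ((n1+1) mod m)} = {vs n2, vs ((n2+1) mod m)}"
      using HsP[OF l1] HsP[OF l2] eq by simp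
    then have "(vs n1 = vs n2 \<and> vs ((n1+1) mod m) = vs ((n2+1) mod m)) \<or>
        (vs n1 = vs ((n2+1) mod m) \<and> vs ((n1+1) mod m) = vs n2)"
      by (simp add: doubleton_eq_iff)
    then show "n1 = n2"
    proof
      assume "vs n1 = vs n2 \<and> vs ((n1+1) mod m) = vs ((n2+1) mod m)"
      then show ?thesis using vi l1 l2 by blast
    next
      assume h: "vs n1 = vs ((n2+1) mod m) \<and> vs ((n1+1) mod m) = vs n2"
      have a: "n1 = (n2+1) mod m" using vi[OF l1 sm[of n2]] h by blast
      have b: "(n1+1) mod m = n2" using vi[OF sm[of n1] l2] h by blast
      have "((n2+1) mod m + 1) mod m = n2" using a b by simp
      then show ?thesis using mod_two_step[OF l2 m3] by blast
    qed
  qed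
  have sub: "{vs n, vs ((n+1) mod m)} \<subseteq> Hs n" if "n < m" for n
  proof -
    have h: "Hs n \<in> H" "\<pi> (Hs n) = {vs n, vs ((n+1) mod m)}" using HsP[OF that] by auto
    then have "\<pi> (Hs n) = {} \<or> \<pi> (Hs n) \<subseteq> Hs n" using cf unfolding choice_function_def by blast
    then show ?thesis using h(2) by auto
  qed
  have img: "Hs ` {..<m} \<subseteq> H" using HsP by auto
  show ?thesis unfolding berge_cycle_def
  proof (intro exI[of _ Hs] exI[of _ vs] conjI)
    show "\<forall>n<m. {vs n, vs ((n + 1) mod m)} \<subseteq> Hs n" using sub by blast
  qed (fact Hinj, fact vinj, fact img)
qed



lemma gdist_ex:
  assumes "connected_on VT ET" "x \<in> VT" "v \<in> VT"
  shows "\<exists>p. walk ET p \<and> hd p = x \<and> last p = v \<and> length p = gdist ET x v + 1"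
proof -
  obtain p where p: "walk ET p" "hd p = x" "last p = v"
    using assms unfolding connected_on_def by blast
  then have "length p = (length p - 1) + 1" using walk_ne by fastforce
  then have "\<exists>n p. walk ET p \<and> hd p = x \<and> last p = v \<and> length p = n + 1" using p by blast
  then show ?thesis unfolding gdist_def by (rule LeastI_ex)
qed

lemma gdist_le: "walk ET p \<Longrightarrow> hd p = x \<Longrightarrow> last p = v \<Longrightarrow> gdist ET x v \<le> length p - 1"
  unfolding gdist_def
proof (rule Least_le)
  assume p: "walk ET p" "hd p = x" "last p = v"
  then have "length p = (length p - 1) + 1" using walk_ne by fastforce
  then show "\<exists>q. walk ET q \<and> hd q = x \<and> last q = v \<and> length q = length p - 1 + 1" using p by blast
qed

lemma gdist0:
  assumes "connected_on VT ET" "x \<in> VT" "v \<in> VT" "gdist ET x v = 0"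
  shows "v = x"
proof -
  obtain p where p: "walk ET p" "hd p = x" "last p = v" "length p = 1"
    using gdist_ex[OF assms(1-3)] assms(4) by auto
  then obtain z where "p = [z]" by (cases p) auto
  then show ?thesis using p by simp
qed

lemma parent:
  assumes con: "connected_on VT ET" and xV: "x \<in> VT" and vV: "v \<in> VT"
    and g: "gdist ET x v = Suc n" and ein: "\<And>e. e \<in> ET \<Longrightarrow> e \<subseteq> VT"
  shows "\<exists>w. w \<in> VT \<and> {w,v} \<in> ET \<and> gdist ET x w = n"
proof -
  obtain p where p: "walk ET p" "hd p = x" "last p = v" "length p = Suc (Suc n)"
    using gdist_ex[OF con xV vV] g by auto
  define w where "w = p ! n"
  have "p ! Suc n = v" using p by (metis last_conv_nth diff_Suc_1 list.size(3) nat.distinct(1))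
  then have e: "{w, v} \<in> ET" using walk_nth[OF p(1), of n] p(4) w_def by simp
  then have wV: "w \<in> VT" using ein by blast
  have "walk ET (take (Suc n) p)" using walk_take[OF p(1)] by simp
  moreover have "hd (take (Suc n) p) = x" using p by (cases p) auto
  moreover have "last (take (Suc n) p) = w" using p(4) w_def
    by (subst last_conv_nth) (auto simp: min_def)
  ultimately have up: "gdist ET x w \<le> n" using gdist_le[of ET "take (Suc n) p" x w] p(4) by simp
  have "\<not> gdist ET x w < n"
  proof
    assume lt: "gdist ET x w < n"
    obtain q where q: "walk ET q" "hd q = x" "last q = w" "length q = gdist ET x w + 1"
      using gdist_ex[OF con xV wV] by auto
    have "walk ET (q @ [v])" using walk_snoc[OF q(1)] q(3) e by simp
    moreover have "hd (q @ [v]) = x" using q walk_ne by (cases q) auto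
    ultimately have "gdist ET x v \<le> length (q @ [v]) - 1" using gdist_le by fastforce
    then show False using lt q(4) g by simp
  qed
  then show ?thesis using up wV e by (intro exI[of _ w]) auto
qed



theorem corollary5p3:
  fixes H :: "'a set set" and \<pi> :: "'a set \<Rightarrow> 'a set"
    and k :: nat and VT :: "'a set" and ET :: "'a set set" and x :: 'a and i :: nat
  assumes "k \<ge> 2"
    and "finite H"
    and "uniform3 H"
    and "linear_hg H"
    and "\<not> berge_cycle H (2 * k + 1)"
    and "choice_function H \<pi>"
    and "is_tree VT ET"
    and "VT \<subseteq> \<Union> H"
    and "ET \<subseteq> G_pi H \<pi>"
    and "x \<in> VT"
    and "1 \<le> i" and "i \<le> k"
  shows "induced_edges (G_pi H \<pi>) (level_set VT ET x i)
           \<le> (2 * k - 2) * card (level_set VT ET x i)"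
proof -
  note nob = assms(5) and cf = assms(6) and ETG = assms(9) and xV = assms(10)
    and i1 = assms(11) and ik = assms(12)
  have finVT: "finite VT" and ein: "\<And>e. e \<in> ET \<Longrightarrow> e \<subseteq> VT" and con: "connected_on VT ET"
    using assms(7) unfolding is_tree_def by auto
  define G where "G = G_pi H \<pi>"
  define V where "V = level_set VT ET x i"
  define gd where "gd = gdist ET x"
  have VVT: "V \<subseteq> VT" and Vgd: "\<And>v. v \<in> V \<Longrightarrow> gd v = i"
    unfolding V_def level_set_def gd_def by auto
  define par where "par v = (SOME w. w \<in> VT \<and> {w,v} \<in> ET \<and> gd w = gd v - 1)" for v
  have parP: "par v \<in> VT \<and> {par v, v} \<in> ET \<and> gd (par v) = gd v - 1"
    if vVT: "v \<in> VT" and g1: "1 \<le> gd v" for v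
  proof -
    obtain n where "gd v = Suc n" using g1 by (cases "gd v") auto
    then obtain w where "w \<in> VT \<and> {w,v} \<in> ET \<and> gd w = gd v - 1"
      using parent[OF con xV vVT _ ein] gd_def by fastforce
    then show ?thesis unfolding par_def by (rule someI)
  qed
  have iterP: "(par^^d) v \<in> VT \<and> gd ((par^^d) v) = gd v - d" if "v \<in> VT" "d \<le> gd v" for v d
    using that(2)
  proof (induction d)
    case 0 then show ?case using that by simp
  next
    case (Suc d)
    then have "(par^^d) v \<in> VT" "gd ((par^^d) v) = gd v - d" by auto
    then show ?case using parP[of "(par^^d) v"] Suc.prems by auto
  qed
  define anc where "anc v m = (par^^(i - m)) v" for v m
  have ancP: "anc v m \<in> VT \<and> gd (anc v m) = m" if "v \<in> V" "m \<le> i" for v m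
    using iterP[of v "i - m"] that VVT Vgd anc_def by auto
  have ancI: "anc v i = v" for v unfolding anc_def by simp
  have ancE: "{anc v m, anc v (Suc m)} \<in> ET" if "v \<in> V" "m < i" for v m
  proof -
    have "anc v m = par (anc v (Suc m))" unfolding anc_def using that(2)
      by (metis Suc_diff_Suc funpow.simps(2) o_apply)
    then show ?thesis using parP[of "anc v (Suc m)"] ancP[of v "Suc m"] that by auto
  qed
  have ancD: "anc v m = (par^^(d-m)) (anc v d)" if "m \<le> d" "d \<le> i" for v m d
  proof -
    have "(par^^(d-m)) ((par^^(i-d)) v) = (par^^(d - m + (i - d))) v"
      by (simp add: funpow_add)
    moreover have "d - m + (i - d) = i - m" using that by simp
    ultimately show ?thesis unfolding anc_def by simp
  qed
  have anc0: "anc v 0 = x" if "v \<in> V" for v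
    using gdist0[OF con xV, of "anc v 0"] ancP[OF that] gd_def by simp
  define F where "F = {e \<in> G. e \<subseteq> V}"
  have edges: "e \<subseteq> V \<and> card e = 2" if "e \<in> F" for e
  proof -
    have "e \<in> G_pi H \<pi>" "e \<subseteq> V" using that F_def G_def by auto
    then obtain E where "E \<in> H" "\<pi> E \<noteq> {}" "e = \<pi> E" unfolding G_pi_def by auto
    then show ?thesis using cf \<open>e \<subseteq> V\<close> unfolding choice_function_def by auto
  qed
  define c where "c = k - i"
  have forb: "anc (hd xs) (Suc j) = anc (last xs) (Suc j)"
    if ji: "j < i" and dx: "distinct xs" and wx: "walk F xs" and sx: "set xs \<subseteq> V"
      and lx: "length xs = 2*c + 2*j + 2" and ag: "anc (hd xs) j = anc (last xs) j" for xs j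
  proof (rule ccontr)
    assume ne: "anc (hd xs) (Suc j) \<noteq> anc (last xs) (Suc j)"
    define u where "u = hd xs"
    define v where "v = last xs"
    have xne: "xs \<noteq> []" using lx by auto
    have uV: "u \<in> V" and vV: "v \<in> V" using sx xne u_def v_def by auto
    define p where "p = i - j"
    have p1: "1 \<le> p" using ji p_def by simp
    define L2 where "L2 = map (\<lambda>t. anc v (i - t)) [1..<Suc p]"
    define L3 where "L3 = map (\<lambda>s. anc u (j + s)) [1..<p]"
    define cyc where "cyc = xs @ L2 @ L3"
    have "length cyc = length xs + p + (p - 1)" unfolding cyc_def L2_def L3_def by simp
    then have lcyc: "length cyc = 2*k + 1" using lx p_def c_def ji ik by arith
    have gx: "gd z = i" if "z \<in> set xs" for z using that sx Vgd by auto
    have gL2: "gd z < i \<and> j \<le> gd z" if zin: "z \<in> set L2" for z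
    proof -
      obtain t where "1 \<le> t" "t \<le> p" "z = anc v (i - t)" using zin L2_def by auto
      then show ?thesis using ancP[OF vV, of "i - t"] p_def ji by auto
    qed
    have gL3: "gd z < i \<and> j < gd z" if zin: "z \<in> set L3" for z
    proof -
      obtain s where "1 \<le> s" "s < p" "z = anc u (j + s)" using zin L3_def by auto
      then show ?thesis using ancP[OF uV, of "j + s"] p_def ji by auto
    qed
    have d2: "distinct L2" unfolding L2_def
    proof (subst distinct_map, intro conjI)
      show "inj_on (\<lambda>t. anc v (i - t)) (set [1..<Suc p])"
      proof (rule inj_onI)
        fix t1 t2 assume h1: "t1 \<in> set [1..<Suc p]" and h2: "t2 \<in> set [1..<Suc p]"
          and eq: "anc v (i - t1) = anc v (i - t2)"
        have r: "t1 \<le> p" "t2 \<le> p" using h1 h2 unfolding set_upt by auto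
        have g1: "gd (anc v (i - t1)) = i - t1" using ancP[OF vV, of "i - t1"] by simp
        have g2: "gd (anc v (i - t2)) = i - t2" using ancP[OF vV, of "i - t2"] by simp
        have "i - t1 = i - t2" using g1 g2 eq by metis
        then show "t1 = t2" using r p_def ji by arith
      qed
    qed simp
    have d3: "distinct L3" unfolding L3_def
    proof (subst distinct_map, intro conjI)
      show "inj_on (\<lambda>s. anc u (j + s)) (set [1..<p])"
      proof (rule inj_onI)
        fix t1 t2 assume h1: "t1 \<in> set [1..<p]" and h2: "t2 \<in> set [1..<p]"
          and eq: "anc u (j + t1) = anc u (j + t2)"
        have r: "t1 < p" "t2 < p" using h1 h2 unfolding set_upt by auto
        have g1: "gd (anc u (j + t1)) = j + t1" using ancP[OF uV, of "j + t1"] r p_def by simp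
        have g2: "gd (anc u (j + t2)) = j + t2" using ancP[OF uV, of "j + t2"] r p_def by simp
        have "j + t1 = j + t2" using g1 g2 eq by metis
        then show "t1 = t2" by simp
      qed
    qed simp
    have disj23: "set L2 \<inter> set L3 = {}"
    proof (rule ccontr)
      assume "set L2 \<inter> set L3 \<noteq> {}"
      then obtain z where z2: "z \<in> set L2" and z3: "z \<in> set L3" by auto
      obtain t where t: "1 \<le> t" "t \<le> p" "z = anc v (i - t)" using z2 L2_def by auto
      obtain s where s: "1 \<le> s" "s < p" "z = anc u (j + s)" using z3 L3_def by auto
      have "gd z = i - t" using ancP[OF vV, of "i - t"] t by simp
      moreover have "gd z = j + s" using ancP[OF uV, of "j + s"] s p_def by simp
      ultimately have dd: "i - t = j + s" by simp
      have "anc v (Suc j) = (par^^(j + s - Suc j)) (anc v (j + s))"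
        using ancD[of "Suc j" "j + s" v] s p_def by simp
      also have "anc v (j + s) = anc u (j + s)" using dd t s by simp
      also have "(par^^(j + s - Suc j)) (anc u (j + s)) = anc u (Suc j)"
        using ancD[of "Suc j" "j + s" u] s p_def by simp
      finally show False using ne u_def v_def by simp
    qed
    have dx23: "set xs \<inter> set (L2 @ L3) = {}"
    proof (rule ccontr)
      assume "set xs \<inter> set (L2 @ L3) \<noteq> {}"
      then obtain z where z1: "z \<in> set xs" and z2: "z \<in> set L2 \<or> z \<in> set L3" by auto
      have "gd z = i" using gx[OF z1] .
      moreover have "gd z < i" using z2 gL2 gL3 by blast
      ultimately show False by simp
    qed
    have d23: "distinct (L2 @ L3)" using d2 d3 disj23 by simp
    have dcyc: "distinct cyc" unfolding cyc_def using dx d23 dx23 by (simp only: distinct_append)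
    have FG: "F \<subseteq> G" unfolding F_def by auto
    have EG: "ET \<subseteq> G" using ETG G_def by simp
    have wxs: "walk G xs" using walk_mono[OF wx FG] .
    have wL2: "walk G L2" unfolding L2_def
    proof (rule walk_map_upt)
      show "1 < Suc p" using p1 by simp
      fix t assume "1 \<le> t" "Suc t < Suc p"
      then have "{anc v (i - Suc t), anc v (Suc (i - Suc t))} \<in> ET" using ancE[OF vV] p_def by simp
      moreover have "Suc (i - Suc t) = i - t" using \<open>Suc t < Suc p\<close> p_def by simp
      ultimately show "{anc v (i - t), anc v (i - Suc t)} \<in> G" using EG by (auto simp: insert_commute)
    qed
    have L2ne: "L2 \<noteq> []" unfolding L2_def using p1 by simp
    have hdL2: "hd L2 = anc v (i - 1)" unfolding L2_def using p1 by (simp add: upt_conv_Cons del: upt_Suc)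
    have lastL2: "last L2 = anc v j" unfolding L2_def using p1 p_def ji by (simp add: last_map del: upt_Suc)
    have j1: "{last xs, hd L2} \<in> G"
    proof -
      have "{anc v (i - 1), anc v (Suc (i - 1))} \<in> ET" using ancE[OF vV, of "i - 1"] i1 by simp
      then show ?thesis using hdL2 v_def ancI i1 EG by (auto simp: insert_commute)
    qed
    have uj: "anc u j = anc v j" using ag u_def v_def by simp
    have wc: "walk G cyc \<and> {last cyc, hd cyc} \<in> G"
    proof -
      have hdc: "hd cyc = u" unfolding cyc_def u_def using xne by simp
      have eu: "{anc u (i - 1), u} \<in> G"
        using ancE[OF uV, of "i - 1"] i1 ancI EG by auto
      show "walk G cyc \<and> {last cyc, hd cyc} \<in> G"
      proof (cases "p = 1")
        case True
        then have "L3 = []" unfolding L3_def by simp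
        then have "cyc = xs @ L2" unfolding cyc_def by simp
        moreover have "j = i - 1" using True p_def ji by simp
        ultimately show ?thesis using walk_append[OF xne L2ne] wxs wL2 j1 lastL2 uj hdc eu L2ne
          by simp
      next
        case False
        then have p2: "2 \<le> p" using p1 by simp
        have L3ne: "L3 \<noteq> []" unfolding L3_def using p2 by simp
        have hdL3: "hd L3 = anc u (Suc j)" unfolding L3_def using p2 by (simp add: upt_conv_Cons del: upt_Suc)
        have "last L3 = anc u (j + (p - 1))" unfolding L3_def using p2 by (simp add: last_map del: upt_Suc)
        then have lastL3: "last L3 = anc u (i - 1)" using p_def ji p2 by (simp add: algebra_simps)
        have wL3: "walk G L3" unfolding L3_def
        proof (rule walk_map_upt)
          show "1 < p" using p2 by simp
          fix t assume "1 \<le> t" "Suc t < p"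
          then have "{anc u (j + t), anc u (Suc (j + t))} \<in> ET" using ancE[OF uV] p_def by simp
          then show "{anc u (j + t), anc u (j + Suc t)} \<in> G" using EG by auto
        qed
        have j2: "{last L2, hd L3} \<in> G"
          using lastL2 hdL3 uj ancE[OF uV, of j] ji EG by auto
        have w23: "walk G (L2 @ L3)" using walk_append[OF L2ne L3ne] wL2 wL3 j2 by simp
        have "walk G (xs @ (L2 @ L3))" using walk_append[OF xne, of "L2 @ L3"] wxs w23 j1 L2ne by simp
        moreover have "last cyc = anc u (i - 1)" unfolding cyc_def using lastL3 L3ne by simp
        ultimately show ?thesis using hdc eu cyc_def by simp
      qed
    qed
    have wcyc: "walk G cyc" and clo: "{last cyc, hd cyc} \<in> G" using wc by auto
    have "berge_cycle H (2*k + 1)"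
      using cycle_berge[OF cf dcyc _ _ lcyc] wcyc clo G_def i1 ik by simp
    then show False using nob by simp
  qed
  have "card F \<le> (2*(c+i) - 2) * card V"
  proof (rule core[of V F i anc c])
    show "finite V" using finite_subset[OF VVT finVT] .
    show "\<And>e. e \<in> F \<Longrightarrow> e \<subseteq> V \<and> card e = 2" by (rule edges)
    show "1 \<le> i" by (rule i1)
    show "\<And>v. v \<in> V \<Longrightarrow> anc v i = v" by (rule ancI)
    show "\<And>u v. u \<in> V \<Longrightarrow> v \<in> V \<Longrightarrow> anc u 0 = anc v 0" using anc0 by simp
    show "\<And>xs j. j < i \<Longrightarrow> distinct xs \<Longrightarrow> walk F xs \<Longrightarrow> set xs \<subseteq> V \<Longrightarrow>
        length xs = 2*c + 2*j + 2 \<Longrightarrow> anc (hd xs) j = anc (last xs) j \<Longrightarrow>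
        anc (hd xs) (Suc j) = anc (last xs) (Suc j)" by (rule forb)
  qed
  moreover have "2*(c+i) - 2 = 2*k - 2" using c_def ik by simp
  ultimately show ?thesis unfolding induced_edges_def F_def G_def V_def by simp
qed


end
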